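(* Let $0<r<1$, let $(\alpha,s)$ be admissible and $\eta>0$. Then there is no Borel probability measure $\mu$ on $\mathbb{R}$ whose Cauchy transform $G_\mu(z)=\int\frac{\mu(dx)}{z-x}$ coincides with $G^{\alpha}_{s,r}$ on a set $\Gamma_{\eta,M}$ (for any $M>0$ for which $G^\alpha_{s,r}$ is defined there).
   Context: Branch conventions: for $w\in\mathbb{C}\setminus[0,\infty)$ and $p\in\{\alpha,1/\alpha\}$, $w^{p}:=e^{p\log_{(1)}w}$, where $\log_{(1)}$ is the branch of the logarithm with imaginary part in $(0,2\pi)$; for $w\in\mathbb{C}\setminus(-\infty,0]$, $w^{1/r}:=e^{\frac1r\operatorname{Log}w}$ (principal logarithm); $r^{1/\alpha}>0$. $\Gamma_{\eta,M}=\{z\in\mathbb{C}:\operatorname{Im}z>M,\ \operatorname{Im}z>\eta|\operatorname{Re}z|\}$. For $0<\alpha\le2$, $r>0$, $s\in\mathbb{C}\setminus\{0\}$, \[ G^{\alpha}_{s,r}(z)=-r^{1/\alpha}\left(\frac{1-\big(1-s(-\tfrac1z)^{\alpha}\big)^{1/r}}{s}\right)^{1/\alpha}, \] which is well defined and analytic on $\Gamma_{\eta,M}$ for $M$ large enough depending on $(\eta,s,r)$. A pair $(\alpha,s)$ ($\arg s\in(-\pi,\pi]$) is admissible if either $0<\alpha\le1$ and $(1-\alpha)\pi\le\arg s\le\pi$, or $1<\alpha\le2$ and $0\le\arg s\le(2-\alpha)\pi$. *)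

theory Defs
  imports "HOL-Analysis.Analysis" "HOL-Probability.Probability"
begin

text \<open>Branch of the logarithm with imaginary part in (0, 2 pi), used on the complement of
  [0, infinity). (Its value on [0, infinity) is irrelevant.)\<close>
definition log1 :: "complex \<Rightarrow> complex" where
  "log1 w = (if Im w \<ge> 0 then Ln w else Ln w + 2 * pi * \<i>)"

definition pow1 :: "complex \<Rightarrow> real \<Rightarrow> complex" where
  "pow1 w p = exp (complex_of_real p * log1 w)"

definition powP :: "complex \<Rightarrow> real \<Rightarrow> complex" where
  "powP w p = exp (complex_of_real p * Ln w)"

definition Gasr :: "real \<Rightarrow> complex \<Rightarrow> real \<Rightarrow> complex \<Rightarrow> complex" where
  "Gasr \<alpha> s r z =
     - complex_of_real (r powr (1 / \<alpha>)) *
       pow1 ((1 - powP (1 - s * pow1 (- 1 / z) \<alpha>) (1 / r)) / s) (1 / \<alpha>)"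

definition Gamma_cone :: "real \<Rightarrow> real \<Rightarrow> complex set" where
  "Gamma_cone \<eta> M = {z. Im z > M \<and> Im z > \<eta> * \<bar>Re z\<bar>}"

definition admissible :: "real \<Rightarrow> complex \<Rightarrow> bool" where
  "admissible \<alpha> s \<longleftrightarrow> s \<noteq> 0 \<and>
     ((0 < \<alpha> \<and> \<alpha> \<le> 1 \<and> (1 - \<alpha>) * pi \<le> Arg s \<and> Arg s \<le> pi) \<or>
      (1 < \<alpha> \<and> \<alpha> \<le> 2 \<and> 0 \<le> Arg s \<and> Arg s \<le> (2 - \<alpha>) * pi))"

definition cauchy_transform :: "real measure \<Rightarrow> complex \<Rightarrow> complex" where
  "cauchy_transform \<mu> z = integral\<^sup>L \<mu> (\<lambda>x. 1 / (z - complex_of_real x))"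

end

theory Submission
  imports Defs
begin

lemma gchoose_bound:
  fixes c :: real
  shows "norm ((complex_of_real c) gchoose n) \<le> (max 1 \<bar>c\<bar>) ^ n"
proof (induction n)
  case 0 then show ?case by simp
next
  case (Suc k)
  let ?K = "max 1 \<bar>c\<bar>"
  have rec: "(complex_of_real c) gchoose (Suc k) = ((complex_of_real c) gchoose k) * (complex_of_real c - of_nat k) / of_nat (Suc k)"
    using gbinomial_mult_1[of "complex_of_real c" k]
    by (simp add: field_simps del: of_nat_Suc)
  have n1: "norm (complex_of_real c - of_nat k) \<le> \<bar>c\<bar> + k"
    by (metis norm_of_real norm_of_nat norm_triangle_ineq4 of_real_of_nat_eq)
  have "\<bar>c\<bar> + k \<le> ?K * (Suc k)"
  proof -
    have k: "real k \<le> ?K * real k" using mult_right_mono[of 1 ?K "real k"] by simp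
    have "\<bar>c\<bar> \<le> ?K" by simp
    with k have "\<bar>c\<bar> + real k \<le> ?K + ?K * real k" by linarith
    thus ?thesis by (simp add: algebra_simps)
  qed
  hence n2: "norm (complex_of_real c - of_nat k) / Suc k \<le> ?K"
    using n1 by (simp add: divide_le_eq del: of_nat_Suc) 
  have "norm ((complex_of_real c) gchoose (Suc k)) = norm ((complex_of_real c) gchoose k) * (norm (complex_of_real c - of_nat k) / Suc k)"
    unfolding rec by (simp add: norm_mult norm_divide del: of_nat_Suc)
  also have "\<dots> \<le> ?K ^ k * ?K"
    using Suc.IH n2 by (intro mult_mono) auto
  finally show ?case by (simp add: mult.commute)
qed

lemma binom_tail:
  fixes c :: real and z :: complex
  defines "K \<equiv> max 1 \<bar>c\<bar>"
  assumes z: "norm z \<le> 1 / (2 * K)"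
  shows "norm ((1 + z) powr (complex_of_real c) - (\<Sum>n<N. ((complex_of_real c) gchoose n) * z ^ n))
           \<le> 2 * K ^ N * norm z ^ N"
proof -
  have K1: "K \<ge> 1" unfolding K_def by simp
  have zl: "norm z * K \<le> 1/2" using z K1 by (simp add: field_simps)
  have "norm z \<le> norm z * K" using K1 mult_left_mono[of 1 K "norm z"] by simp
  hence "norm z < 1" using zl by linarith
  from sums_split_initial_segment[OF gen_binomial_complex[OF this, of "complex_of_real c"], of N]
  have S: "(\<lambda>i. (complex_of_real c gchoose (i + N)) * z ^ (i + N)) sums
      ((1 + z) powr (complex_of_real c) - (\<Sum>n<N. ((complex_of_real c) gchoose n) * z ^ n))" .
  have bnd: "norm ((complex_of_real c gchoose (i + N)) * z ^ (i + N)) \<le> (K * norm z) ^ N * (1/2) ^ i" for i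
  proof -
    have "norm ((complex_of_real c gchoose (i + N)) * z ^ (i + N)) \<le> K ^ (i+N) * norm z ^ (i + N)"
      unfolding norm_mult norm_power using gchoose_bound[of c "i+N"] K_def
      by (intro mult_right_mono) auto
    also have "\<dots> = (K * norm z) ^ N * (K * norm z) ^ i"
      by (simp add: power_add power_mult_distrib)
    also have "\<dots> \<le> (K * norm z) ^ N * (1/2) ^ i"
      using zl K1 by (intro mult_left_mono power_mono) (auto simp: mult.commute)
    finally show ?thesis .
  qed
  have sg: "summable (\<lambda>i. (K * norm z) ^ N * (1/2::real) ^ i)"
    by (intro summable_mult summable_geometric) auto
  have "norm ((1 + z) powr (complex_of_real c) - (\<Sum>n<N. ((complex_of_real c) gchoose n) * z ^ n))
      \<le> (\<Sum>i. (K * norm z) ^ N * (1/2::real) ^ i)"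
    using norm_suminf_le[OF bnd sg] S by (simp add: sums_iff)
  also have "\<dots> = (K * norm z) ^ N * 2"
    using suminf_geometric[of "1/2::real"] by (simp add: suminf_mult)
  finally show ?thesis by (simp add: power_mult_distrib mult_ac)
qed

lemma pt_norm:
  fixes x y :: real assumes "y > 0"
  shows "norm (\<i> * complex_of_real y * (1 / (\<i> * complex_of_real y - complex_of_real x)) - 1/2) = 1/2"
proof -
  have nz: "\<i> * complex_of_real y - complex_of_real x \<noteq> 0"
    using assms by (metis complex_i_not_zero diff_eq_eq mult_eq_0_iff of_real_eq_0_iff add_0 Im_complex_of_real
        Im_i_times Re_complex_of_real less_irrefl)
  have "\<i> * complex_of_real y * (1 / (\<i> * complex_of_real y - complex_of_real x)) - 1/2
      = (\<i> * complex_of_real y + complex_of_real x) / (2 * (\<i> * complex_of_real y - complex_of_real x))"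
    using nz by (simp add: field_simps)
  also have "norm \<dots> = 1/2"
  proof -
    have "norm (\<i> * complex_of_real y + complex_of_real x) = norm (\<i> * complex_of_real y - complex_of_real x)"
      by (simp add: cmod_def)
    moreover have "norm (2 * (\<i> * complex_of_real y - complex_of_real x)) = 2 * norm (\<i> * complex_of_real y - complex_of_real x)"
      by (simp only: norm_mult) simp
    ultimately show ?thesis using nz by (simp add: norm_divide)
  qed
  finally show ?thesis .
qed

lemma ct_disk:
  assumes P: "prob_space \<mu>" and S: "sets \<mu> = sets borel" and y: "y > 0"
  shows "norm (\<i> * complex_of_real y * cauchy_transform \<mu> (\<i> * complex_of_real y) - 1/2) \<le> 1/2"
proof -
  interpret prob_space \<mu> by (rule P)
  define f where "f x = 1 / (\<i> * complex_of_real y - complex_of_real x)" for x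
  have meas: "f \<in> borel_measurable \<mu>"
    unfolding f_def measurable_cong_sets[OF S refl] by measurable
  have bnd: "norm (f x) \<le> 1 / y" for x
  proof -
    have "y \<le> norm (\<i> * complex_of_real y - complex_of_real x)"
      using abs_Im_le_cmod[of "\<i> * complex_of_real y - complex_of_real x"] y by simp
    thus ?thesis unfolding f_def using y by (simp add: norm_divide divide_simps)
  qed
  have intf: "integrable \<mu> f"
    by (rule integrable_const_bound[of _ "1/y"]) (use bnd meas in auto)
  have "\<i> * complex_of_real y * cauchy_transform \<mu> (\<i> * complex_of_real y) - 1/2
      = (\<integral>x. (\<i> * complex_of_real y * f x - 1/2) \<partial>\<mu>)"
    unfolding cauchy_transform_def f_def[symmetric]
    using intf prob_space by (simp add: integral_mult_right_zero)
  also have "norm \<dots> \<le> (\<integral>x. norm (\<i> * complex_of_real y * f x - 1/2) \<partial>\<mu>)"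
    by (rule integral_norm_bound)
  also have "\<dots> = (\<integral>x. 1/2 \<partial>\<mu>)"
    unfolding f_def using pt_norm[OF y] by (intro Bochner_Integration.integral_cong) auto
  also have "\<dots> = 1/2" using prob_space by simp
  finally show ?thesis .
qed

lemma log1_exp:
  assumes "0 \<le> Im L" "Im L < 2 * pi"
  shows "log1 (exp L) = L"
proof (cases "Im L \<le> pi")
  case True
  have "Im (exp L) \<ge> 0" using True assms by (simp add: Im_exp sin_ge_zero)
  moreover have "Ln (exp L) = L" using True assms by (intro Ln_exp) auto
  ultimately show ?thesis by (simp add: log1_def)
next
  case False
  have "sin (Im L) < 0" using False assms by (intro sin_lt_zero) auto
  hence "Im (exp L) < 0" by (simp add: Im_exp mult_pos_neg)
  moreover have "exp L = exp (L - 2 * pi * \<i>)"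
    by (simp add: exp_diff)
  moreover have "Ln (exp (L - 2 * pi * \<i>)) = L - 2 * pi * \<i>" using False assms by (intro Ln_exp) auto
  ultimately show ?thesis by (simp add: log1_def)
qed


lemma exp_i_half_pi: "exp (\<i> * complex_of_real pi / 2) = \<i>"
proof -
  have "exp (\<i> * complex_of_real pi / 2) = cis (pi/2)"
    by (simp add: cis_conv_exp)
  thus ?thesis by (simp add: complex_eq_iff)
qed

lemma gasr_formula:
  fixes \<alpha> r y :: real and s :: complex
  assumes y: "y > 0" and a: "0 < \<alpha>" "\<alpha> \<le> 2" and r: "r > 0" and s: "s \<noteq> 0"
  defines "L0 \<equiv> complex_of_real (ln (1/y)) + \<i> * complex_of_real (pi/2)"
  defines "t \<equiv> s * exp (complex_of_real \<alpha> * L0)"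
  defines "h \<equiv> complex_of_real r * (1 - (1 - t) powr complex_of_real (1/r)) / t"
  assumes t1: "1 - t \<noteq> 0" and h0: "h \<noteq> 0" and hA: "\<bar>Im (Ln h)\<bar> < \<alpha> * pi / 2"
  shows "\<i> * complex_of_real y * Gasr \<alpha> s r (\<i> * complex_of_real y) = exp (Ln h / complex_of_real \<alpha>)"
proof -
  have eL0: "exp L0 = \<i> * complex_of_real (1/y)"
    unfolding L0_def using y by (simp add: exp_add exp_of_real exp_i_half_pi mult.commute)
  have m1: "- 1 / (\<i> * complex_of_real y) = exp L0"
    unfolding eL0 using y by (simp add: field_simps)
  have lg0: "log1 (exp L0) = L0"
    by (rule log1_exp) (simp_all add: L0_def)
  have w: "pow1 (- 1 / (\<i> * complex_of_real y)) \<alpha> = exp (complex_of_real \<alpha> * L0)"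
    unfolding m1 pow1_def lg0 ..
  have t0: "t \<noteq> 0" unfolding t_def using s by simp
  have P: "powP (1 - s * exp (complex_of_real \<alpha> * L0)) (1 / r) = (1 - t) powr complex_of_real (1/r)"
    unfolding powP_def t_def[symmetric] using t1 by (simp add: powr_def)
  define L where "L = complex_of_real \<alpha> * L0 + Ln h - complex_of_real (ln r)"
  have A: "(1 - (1 - t) powr complex_of_real (1/r)) / s = exp L"
  proof -
    have "exp L = exp (complex_of_real \<alpha> * L0) * h / complex_of_real r"
      unfolding L_def using h0 r by (simp add: exp_diff exp_add exp_of_real)
    also have "\<dots> = (1 - (1 - t) powr complex_of_real (1/r)) / s"
      unfolding h_def using t0 s r by (simp add: t_def field_simps)
    finally show ?thesis ..
  qed
  have ImL: "Im L = \<alpha> * pi / 2 + Im (Ln h)"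
    unfolding L_def L0_def by simp
  have ap: "\<alpha> * pi \<le> 2 * pi" using a by (intro mult_right_mono) auto
  have "0 \<le> \<alpha> * pi" using a by simp
  have lgA: "log1 (exp L) = L"
  proof (rule log1_exp)
    have h1: "Im (Ln h) < \<alpha> * pi / 2" "- (\<alpha> * pi / 2) < Im (Ln h)"
      using hA by (auto simp: abs_less_iff)
    show "0 \<le> Im L" using ImL h1 by linarith
    show "Im L < 2 * pi" using ImL h1 ap by linarith
  qed
  have "Gasr \<alpha> s r (\<i> * complex_of_real y) = - complex_of_real (r powr (1 / \<alpha>)) * exp (complex_of_real (1/\<alpha>) * L)"
    unfolding Gasr_def w P A by (simp only: pow1_def lgA)
  also have "exp (complex_of_real (1/\<alpha>) * L) = exp L0 * exp (Ln h / complex_of_real \<alpha>) / complex_of_real (exp (ln r / \<alpha>))"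
  proof -
    have "complex_of_real (1/\<alpha>) * L = L0 + Ln h / complex_of_real \<alpha> - complex_of_real (ln r / \<alpha>)"
      unfolding L_def using a by (simp add: field_simps)
    moreover have "exp (complex_of_real (ln r / \<alpha>)) = complex_of_real (exp (ln r / \<alpha>))"
      by (simp only: exp_of_real)
    ultimately show ?thesis by (simp only: exp_add exp_diff)
  qed
  also have "r powr (1 / \<alpha>) = exp (ln r / \<alpha>)" using r by (simp add: powr_def)
  finally have "Gasr \<alpha> s r (\<i> * complex_of_real y) = - \<i> * complex_of_real (1/y) * exp (Ln h / complex_of_real \<alpha>)"
    unfolding eL0 by simp
  thus ?thesis using y by (simp add: field_simps)
qed

lemma gch2: "(c::complex) gchoose 2 = c * (c - 1) / 2"
  by (simp add: gbinomial_prod_rev eval_nat_numeral prod.atLeast0_lessThan_Suc)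
lemma gch3: "(c::complex) gchoose 3 = c * (c - 1) * (c - 2) / 6"
  by (simp add: gbinomial_prod_rev eval_nat_numeral prod.atLeast0_lessThan_Suc algebra_simps)

lemma h_expand:
  fixes r :: real and t :: complex
  assumes r: "0 < r" "r < 1" and t0: "t \<noteq> 0" and tb: "norm t \<le> r / 2"
  defines "h \<equiv> complex_of_real r * (1 - (1 - t) powr complex_of_real (1/r)) / t"
  shows "norm (h - (1 - complex_of_real ((1/r-1)/2) * t + complex_of_real ((1/r-1)*(1/r-2)/6) * t^2))
          \<le> 2 * (1/r)^4 * r * norm t ^ 3"
proof -
  have K: "max 1 \<bar>1/r\<bar> = 1/r" using r by (simp add: field_simps)
  have z: "norm (-t) \<le> 1 / (2 * max 1 \<bar>1/r\<bar>)" unfolding K using tb by simp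
  have B: "norm ((1 + - t) powr complex_of_real (1/r) - (\<Sum>n<4. (complex_of_real (1/r) gchoose n) * (-t) ^ n))
           \<le> 2 * (1/r) ^ 4 * norm t ^ 4"
    using binom_tail[OF z, of 4] unfolding K by simp
  define E where "E = (1 - t) powr complex_of_real (1/r) - (\<Sum>n<4. (complex_of_real (1/r) gchoose n) * (-t) ^ n)"
  have nE: "norm E \<le> 2 * (1/r) ^ 4 * norm t ^ 4" using B unfolding E_def by simp
  define p where "p = complex_of_real (1/r)"
  have rp: "complex_of_real r * p = 1" unfolding p_def using r by (simp flip: of_real_mult)
  have sum4: "(\<Sum>n<4. f n) = f 0 + f 1 + f 2 + f 3" for f :: "nat \<Rightarrow> complex"
    by (simp add: eval_nat_numeral)
  have S: "(\<Sum>n<4. (p gchoose n) * (-t) ^ n)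
      = 1 - p * t + p * (p - 1) / 2 * t^2 - p * (p - 1) * (p - 2) / 6 * t^3"
    unfolding sum4 gch2 gch3 by (simp add: power2_eq_square power3_eq_cube)
  have co: "complex_of_real ((1/r-1)/2) = (p - 1) / 2" "complex_of_real ((1/r-1)*(1/r-2)/6) = (p - 1) * (p - 2) / 6"
    unfolding p_def by simp_all
  have key: "complex_of_real r * (1 - (\<Sum>n<4. (p gchoose n) * (-t) ^ n))
         = (complex_of_real r * p) * (t * (1 - (p - 1) / 2 * t + (p - 1) * (p - 2) / 6 * t^2))"
    unfolding S by (simp add: algebra_simps power2_eq_square power3_eq_cube)
  have "h - (1 - complex_of_real ((1/r-1)/2) * t + complex_of_real ((1/r-1)*(1/r-2)/6) * t^2)
      = (complex_of_real r * (1 - (\<Sum>n<4. (p gchoose n) * (-t) ^ n)) - complex_of_real r * E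
          - t * (1 - (p - 1) / 2 * t + (p - 1) * (p - 2) / 6 * t^2)) / t"
    unfolding h_def E_def co p_def[symmetric] using t0 by (simp add: field_simps)
  also have "\<dots> = - complex_of_real r * E / t"
    unfolding key rp by simp
  also have "norm \<dots> = r * norm E / norm t" using r by (simp add: norm_mult norm_divide)
  also have "\<dots> \<le> 2 * (1/r)^4 * r * norm t ^ 3"
  proof -
    have tp: "norm t > 0" using t0 by simp
    have x4: "norm t ^ 4 = norm t ^ 3 * norm t" by (simp add: eval_nat_numeral)
    have "r * norm E \<le> r * (2 * (1/r) ^ 4 * norm t ^ 4)"
      using nE r by (intro mult_left_mono) auto
    also have "\<dots> = (2 * (1/r)^4 * r * norm t ^ 3) * norm t" unfolding x4 by (simp only: mult_ac)
    finally show ?thesis using tp by (simp only: pos_divide_le_eq)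
  qed
  finally show ?thesis .
qed

lemma ntri: "norm (a::'a::real_normed_vector) \<le> norm (a - b) + norm b"
  using norm_triangle_ineq2[of a b] by linarith

lemma pow_lin:
  fixes c :: real and u :: complex
  assumes "norm u \<le> 1 / (2 * max 1 \<bar>c\<bar>)"
  shows "norm ((1 + u) powr complex_of_real c - 1 - complex_of_real c * u) \<le> 2 * (max 1 \<bar>c\<bar>)^2 * norm u ^ 2"
proof -
  have "(\<Sum>n<2. (complex_of_real c gchoose n) * u ^ n) = 1 + complex_of_real c * u"
    by (simp add: eval_nat_numeral)
  thus ?thesis using binom_tail[OF assms, of 2] by (simp add: algebra_simps)
qed

lemma Im_Ln_bound:
  fixes u :: complex assumes "norm u \<le> 1/2"
  shows "\<bar>Im (Ln (1 + u))\<bar> \<le> 2 * norm u"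
proof -
  have "norm (Ln (1 + u) - u) \<le> norm u ^ 2 / (1 - norm u)"
    using assms by (intro Ln_approx_linear) auto
  also have "\<dots> \<le> norm u"
  proof -
    have "norm u ^ 2 \<le> norm u * (1 - norm u)" using assms
      by (simp add: power2_eq_square mult_left_mono)
    thus ?thesis using assms by (simp add: divide_le_eq)
  qed
  moreover have "norm (Ln (1 + u)) \<le> norm (Ln (1 + u) - u) + norm u"
    by (rule ntri)
  ultimately have "norm (Ln (1 + u)) \<le> 2 * norm u" by linarith
  thus ?thesis using abs_Im_le_cmod[of "Ln (1 + u)"] by linarith
qed

lemma disk_out:
  fixes g :: complex
  assumes "Re (g - 1) + (norm (g - 1))^2 > 0"
  shows "norm (g - 1/2) > 1/2"
proof -
  have e1: "(norm (g - 1))^2 = (Re g - 1)^2 + (Im g)^2" by (simp add: cmod_power2)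
  have e2: "(norm (g - 1/2))^2 = (Re g - 1/2)^2 + (Im g)^2" by (simp add: cmod_power2)
  have "(1/2::real)^2 < (norm (g - 1/2))^2"
  proof -
    have a: "Re g - 1 + ((Re g - 1)^2 + (Im g)^2) > 0" using assms e1 by simp
    have b: "(Re g - 1/2)^2 + (Im g)^2 - 1/4 = Re g - 1 + ((Re g - 1)^2 + (Im g)^2)"
      by (simp add: power2_eq_square algebra_simps)
    show ?thesis unfolding e2 using a b by (simp add: power2_eq_square)
  qed
  thus ?thesis by (rule power_less_imp_less_base) simp
qed

lemma u_bounds:
  fixes r :: real and t :: complex
  assumes r: "0 < r" "r < 1" and t0: "t \<noteq> 0" and tb: "norm t \<le> r / 2"
  defines "h \<equiv> complex_of_real r * (1 - (1 - t) powr complex_of_real (1/r)) / t"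
  defines "a \<equiv> (1/r - 1) / 2" and "b \<equiv> (1/r - 1) * (1/r - 2) / 6" and "C2 \<equiv> 2 * (1/r)^4 * r"
  shows "norm (h - 1 + complex_of_real a * t - complex_of_real b * t^2) \<le> C2 * norm t ^ 3"
    and "norm (h - 1 + complex_of_real a * t) \<le> (\<bar>b\<bar> + C2) * norm t ^ 2"
    and "norm (h - 1) \<le> (a + \<bar>b\<bar> + C2) * norm t"
    and "1 - t \<noteq> 0" and "a > 0" and "C2 > 0"
proof -
  show e: "norm (h - 1 + complex_of_real a * t - complex_of_real b * t^2) \<le> C2 * norm t ^ 3"
    using h_expand[OF r t0 tb] unfolding h_def a_def b_def C2_def by (simp add: algebra_simps)
  have t1: "norm t \<le> 1" using tb r by simp
  have C2p: "C2 \<ge> 0" unfolding C2_def using r by simp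
  show "C2 > 0" unfolding C2_def using r by simp
  show ap: "a > 0" unfolding a_def using r by (simp add: field_simps)
  have "norm (h - 1 + complex_of_real a * t) \<le> norm (h - 1 + complex_of_real a * t - complex_of_real b * t^2) + norm (complex_of_real b * t^2)"
    using ntri[of "h - 1 + complex_of_real a * t" "complex_of_real b * t^2"] by simp
  also have "\<dots> \<le> C2 * norm t ^ 3 + \<bar>b\<bar> * norm t ^ 2"
    using e by (simp add: norm_mult norm_power)
  also have "C2 * norm t ^ 3 \<le> C2 * norm t ^ 2"
    using t1 C2p by (intro mult_left_mono power_decreasing) auto
  finally show e2: "norm (h - 1 + complex_of_real a * t) \<le> (\<bar>b\<bar> + C2) * norm t ^ 2"
    by (simp add: algebra_simps)
  have "norm (h - 1) \<le> norm (h - 1 + complex_of_real a * t) + norm (complex_of_real a * t)"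
    using ntri[of "h - 1" "- (complex_of_real a * t)"] by simp
  also have "\<dots> \<le> (\<bar>b\<bar> + C2) * norm t ^ 2 + a * norm t"
    using e2 ap by (simp add: norm_mult)
  also have "(\<bar>b\<bar> + C2) * norm t ^ 2 \<le> (\<bar>b\<bar> + C2) * norm t"
    using t1 C2p by (intro mult_left_mono) (auto simp: power2_eq_square mult_left_le_one_le)
  finally show "norm (h - 1) \<le> (a + \<bar>b\<bar> + C2) * norm t" by (simp add: algebra_simps)
  show "1 - t \<noteq> 0" using tb r by auto
qed

definition good :: "real \<Rightarrow> real \<Rightarrow> complex \<Rightarrow> bool" where
  "good \<alpha> r t \<longleftrightarrow> (1 - t \<noteq> 0 \<and>
     complex_of_real r * (1 - (1 - t) powr complex_of_real (1/r)) / t \<noteq> 0 \<and>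
     \<bar>Im (Ln (complex_of_real r * (1 - (1 - t) powr complex_of_real (1/r)) / t))\<bar> < \<alpha> * pi / 2 \<and>
     norm (exp (Ln (complex_of_real r * (1 - (1 - t) powr complex_of_real (1/r)) / t) / complex_of_real \<alpha>) - 1/2) > 1/2)"

lemma interior:
  fixes \<alpha> r :: real and \<tau> :: complex
  assumes al: "0 < \<alpha>" and r: "0 < r" "r < 1" and tau: "Re \<tau> < 0"
  shows "\<exists>\<epsilon>0>0. \<forall>\<epsilon>. 0 < \<epsilon> \<longrightarrow> \<epsilon> < \<epsilon>0 \<longrightarrow> good \<alpha> r (complex_of_real \<epsilon> * \<tau>)"
proof -
  define a where "a = (1/r - 1) / 2"
  define b where "b = (1/r - 1) * (1/r - 2) / 6"
  define C2 where "C2 = 2 * (1/r)^4 * r"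
  define Cv where "Cv = \<bar>b\<bar> + C2"
  define Cu where "Cu = a + \<bar>b\<bar> + C2"
  define Ka where "Ka = max 1 \<bar>1/\<alpha>\<bar>"
  define Ce where "Ce = 2 * Ka^2"
  define nt where "nt = norm \<tau>"
  define \<kappa> where "\<kappa> = - Re \<tau>"
  define m where "m = min (1/2) (min (1/(2*Ka)) (\<alpha>*pi/8))"
  define D where "D = Cv/\<alpha> + Ce * Cu^2"
  define \<epsilon>0 where "\<epsilon>0 = min (r/2/nt) (min (m/(Cu*nt)) ((a*\<kappa>/\<alpha>) / (D*nt^2 + 1)))"
  have ap: "a > 0" unfolding a_def using r by (simp add: field_simps)
  have C2p: "C2 > 0" unfolding C2_def using r by simp
  have Cup: "Cu > 0" unfolding Cu_def using ap C2p by simp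
  have Cvp: "Cv \<ge> 0" unfolding Cv_def using C2p by simp
  have Kap: "Ka \<ge> 1" unfolding Ka_def by simp
  have Cep: "Ce \<ge> 0" unfolding Ce_def by simp
  have \<kappa>p: "\<kappa> > 0" unfolding \<kappa>_def using tau by simp
  have ntp: "nt > 0" unfolding nt_def using tau by auto
  have mp: "m > 0" unfolding m_def using Kap al by simp
  have Dp: "D \<ge> 0" unfolding D_def using Cvp Cep al by simp
  have d1: "D*nt^2 + 1 > 0" using Dp by (simp add: add_nonneg_pos)
  have q: "(a*\<kappa>/\<alpha>) / (D*nt^2+1) > 0" using d1 ap \<kappa>p al by simp
  have e0p: "\<epsilon>0 > 0" unfolding \<epsilon>0_def using r ntp mp Cup q by simp
  show ?thesis
  proof (intro exI[of _ \<epsilon>0] conjI allI impI e0p)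
    fix \<epsilon> :: real assume ep: "0 < \<epsilon>" "\<epsilon> < \<epsilon>0"
    define t where "t = complex_of_real \<epsilon> * \<tau>"
    define h where "h = complex_of_real r * (1 - (1 - t) powr complex_of_real (1/r)) / t"
    define u where "u = h - 1"
    have nt_t: "norm t = \<epsilon> * nt" unfolding t_def nt_def using ep by (simp add: norm_mult)
    have t0: "t \<noteq> 0" unfolding t_def using ep tau by auto
    have "\<epsilon> * nt < (r/2/nt) * nt" using ep ntp unfolding \<epsilon>0_def by (intro mult_strict_right_mono) auto
    hence tb: "norm t \<le> r / 2" using ntp nt_t by simp
    note UB = u_bounds[OF r t0 tb, folded h_def a_def b_def C2_def]
    have Uv: "norm (u + complex_of_real a * t) \<le> Cv * (\<epsilon> * nt)^2"
      using UB(2) unfolding u_def Cv_def nt_t by simp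
    have "\<epsilon> * nt < (m/(Cu*nt)) * nt" using ep ntp unfolding \<epsilon>0_def by (intro mult_strict_right_mono) auto
    hence "Cu * (\<epsilon> * nt) < m" using ntp Cup by (simp add: field_simps)
    moreover have Uu: "norm u \<le> Cu * (\<epsilon> * nt)" using UB(3) unfolding u_def Cu_def nt_t by simp
    ultimately have um: "norm u < m" by linarith
    have u12: "norm u < 1/2" using um unfolding m_def by simp
    have uKa: "norm u \<le> 1 / (2 * Ka)" using um unfolding m_def by simp
    have uap: "norm u < \<alpha>*pi/8" using um unfolding m_def by simp
    have h1u: "h = 1 + u" unfolding u_def by simp
    have h0: "h \<noteq> 0"
    proof
      assume "h = 0" hence "u = -1" unfolding u_def by simp
      thus False using u12 by simp
    qed
    have ImL: "\<bar>Im (Ln h)\<bar> < \<alpha> * pi / 2"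
    proof -
      have "\<bar>Im (Ln h)\<bar> \<le> 2 * norm u" unfolding h1u using u12 by (intro Im_Ln_bound) simp
      also have "\<dots> < \<alpha> * pi / 2"
      proof -
        have "\<alpha> * pi > 0" using al by simp
        thus ?thesis using uap by linarith
      qed
      finally show ?thesis .
    qed
    define g where "g = exp (Ln h / complex_of_real \<alpha>)"
    have gp: "g = (1 + u) powr complex_of_real (1/\<alpha>)"
      unfolding g_def h1u[symmetric] using h0 by (simp add: powr_def field_simps)
    have PL: "norm (g - 1 - complex_of_real (1/\<alpha>) * u) \<le> Ce * norm u ^ 2"
      unfolding gp Ce_def using pow_lin[OF uKa[unfolded Ka_def]] unfolding Ka_def by simp
    have ReU: "Re u \<ge> a * \<epsilon> * \<kappa> - Cv * (\<epsilon> * nt)^2"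
    proof -
      have "- Re (u + complex_of_real a * t) \<le> norm (u + complex_of_real a * t)"
        using abs_Re_le_cmod[of "u + complex_of_real a * t"] by linarith
      moreover have "Re (complex_of_real a * t) = - a * \<epsilon> * \<kappa>" unfolding t_def \<kappa>_def by simp
      ultimately show ?thesis using Uv by simp
    qed
    have ReG: "Re (g - 1) \<ge> Re u / \<alpha> - Ce * (Cu * (\<epsilon> * nt))^2"
    proof -
      have "- Re (g - 1 - complex_of_real (1/\<alpha>) * u) \<le> Ce * norm u ^ 2"
        using abs_Re_le_cmod[of "g - 1 - complex_of_real (1/\<alpha>) * u"] PL by linarith
      moreover have "Ce * norm u ^ 2 \<le> Ce * (Cu * (\<epsilon> * nt))^2"
        using Uu Cep by (intro mult_left_mono power_mono) auto
      moreover have "Re (complex_of_real (1/\<alpha>) * u) = Re u / \<alpha>" by simp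
      ultimately show ?thesis by simp
    qed
    have A1: "Re u / \<alpha> \<ge> (a * \<epsilon> * \<kappa> - Cv * (\<epsilon> * nt)^2) / \<alpha>"
      using ReU al by (simp add: divide_right_mono)
    have eqR: "\<epsilon> * (a * \<kappa> / \<alpha> - \<epsilon> * (D * nt^2)) = (a * \<epsilon> * \<kappa> - Cv * (\<epsilon> * nt)^2) / \<alpha> - Ce * (Cu * (\<epsilon> * nt))^2"
      unfolding D_def using al by (simp add: field_simps power2_eq_square)
    have R1: "Re (g - 1) \<ge> \<epsilon> * (a * \<kappa> / \<alpha> - \<epsilon> * (D * nt^2))"
      unfolding eqR using A1 ReG by (meson diff_right_mono order_trans)
    have "\<epsilon> * (D * nt^2) < a * \<kappa> / \<alpha>"
    proof -
      have "\<epsilon> < (a*\<kappa>/\<alpha>) / (D*nt^2 + 1)" using ep unfolding \<epsilon>0_def by simp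
      hence "\<epsilon> * (D*nt^2 + 1) < a*\<kappa>/\<alpha>" using d1 by (simp only: pos_less_divide_eq)
      moreover have "\<epsilon> * (D * nt^2) \<le> \<epsilon> * (D*nt^2 + 1)" using ep by simp
      ultimately show ?thesis by linarith
    qed
    hence "\<epsilon> * (a * \<kappa> / \<alpha> - \<epsilon> * (D * nt^2)) > 0" using ep by simp
    hence "Re (g - 1) > 0" using R1 by linarith
    hence "Re (g - 1) + (norm (g - 1))^2 > 0" by (simp add: add_pos_nonneg)
    hence "norm (g - 1/2) > 1/2" by (rule disk_out)
    thus "good \<alpha> r (complex_of_real \<epsilon> * \<tau>)"
      unfolding good_def t_def[symmetric] h_def[symmetric] g_def[symmetric]
      using UB(4) h0 ImL by simp
  qed
qed

lemma boundary:
  fixes r \<sigma>0 :: real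
  assumes r: "0 < r" "r < 1" and s0: "\<sigma>0 \<noteq> 0"
  shows "\<exists>\<epsilon>0>0. \<forall>\<epsilon>. 0 < \<epsilon> \<longrightarrow> \<epsilon> < \<epsilon>0 \<longrightarrow> good 1 r (complex_of_real \<epsilon> * (\<i> * complex_of_real \<sigma>0))"
proof -
  define a where "a = (1/r - 1) / 2"
  define b where "b = (1/r - 1) * (1/r - 2) / 6"
  define C2 where "C2 = 2 * (1/r)^4 * r"
  define Cu where "Cu = a + \<bar>b\<bar> + C2"
  define \<gamma> where "\<gamma> = a^2 - b"
  define Cb where "Cb = C2 * (1 + 2 * a)"
  define n0 where "n0 = \<bar>\<sigma>0\<bar>"
  define \<epsilon>0 where "\<epsilon>0 = min (r/2/n0) (min (1/(4*Cu*n0)) (\<gamma>/(Cb*n0)))"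
  have ap: "a > 0" unfolding a_def using r by (simp add: field_simps)
  have C2p: "C2 > 0" unfolding C2_def using r by simp
  have Cup: "Cu > 0" unfolding Cu_def using ap C2p by simp
  have Cbp: "Cb > 0" unfolding Cb_def using ap C2p by simp
  have n0p: "n0 > 0" unfolding n0_def using s0 by simp
  have \<gamma>eq: "\<gamma> = (1/r - 1) * (1/r + 1) / 12" unfolding \<gamma>_def a_def b_def
    using r by (simp add: field_simps power2_eq_square)
  have r1: "1/r > 1" using r by simp
  have \<gamma>p: "\<gamma> > 0" unfolding \<gamma>eq using r1 by (intro divide_pos_pos mult_pos_pos) auto
  have e0p: "\<epsilon>0 > 0" unfolding \<epsilon>0_def using r n0p Cup Cbp \<gamma>p by simp
  show ?thesis
  proof (intro exI[of _ \<epsilon>0] conjI allI impI e0p)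
    fix \<epsilon> :: real assume ep: "0 < \<epsilon>" "\<epsilon> < \<epsilon>0"
    define \<sigma> where "\<sigma> = \<epsilon> * \<sigma>0"
    define t where "t = complex_of_real \<epsilon> * (\<i> * complex_of_real \<sigma>0)"
    have t\<sigma>: "t = \<i> * complex_of_real \<sigma>" unfolding t_def \<sigma>_def by simp
    define h where "h = complex_of_real r * (1 - (1 - t) powr complex_of_real (1/r)) / t"
    define u where "u = h - 1"
    define s2 where "s2 = \<bar>\<sigma>\<bar>"
    have s2eq: "s2 = \<epsilon> * n0" unfolding s2_def \<sigma>_def n0_def using ep by (simp add: abs_mult)
    have nt_t: "norm t = s2" unfolding t\<sigma> s2_def by (simp add: norm_mult)
    have t0: "t \<noteq> 0" unfolding t_def using ep s0 by auto
    have "\<epsilon> * n0 < (r/2/n0) * n0" using ep n0p unfolding \<epsilon>0_def by (intro mult_strict_right_mono) auto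
    hence tb: "norm t \<le> r / 2" using n0p nt_t s2eq by simp
    have s21: "s2 \<le> 1" using tb nt_t r by simp
    note UB = u_bounds[OF r t0 tb, folded h_def a_def b_def C2_def]
    have "\<epsilon> * n0 < (1/(4*Cu*n0)) * n0" using ep n0p unfolding \<epsilon>0_def by (intro mult_strict_right_mono) auto
    hence "Cu * s2 < 1/4" using n0p Cup s2eq by (simp add: field_simps)
    moreover have Uu: "norm u \<le> Cu * s2" using UB(3) unfolding u_def Cu_def nt_t by simp
    ultimately have u14: "norm u < 1/4" by linarith
    have h1u: "h = 1 + u" unfolding u_def by simp
    have h0: "h \<noteq> 0"
    proof
      assume "h = 0" hence "u = -1" unfolding u_def by simp
      thus False using u14 by simp
    qed
    have ImL: "\<bar>Im (Ln h)\<bar> < 1 * pi / 2"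
    proof -
      have "\<bar>Im (Ln h)\<bar> \<le> 2 * norm u" unfolding h1u using u14 by (intro Im_Ln_bound) simp
      also have "\<dots> < 1" using u14 by simp
      also have "1 \<le> 1 * pi / 2" using pi_gt3 by simp
      finally show ?thesis .
    qed
    define e where "e = u + complex_of_real a * t - complex_of_real b * t^2"
    have nE: "norm e \<le> C2 * s2 ^ 3" using UB(1) unfolding e_def u_def nt_t by simp
    have ue: "u = e - \<i> * complex_of_real (a * \<sigma>) - complex_of_real (b * \<sigma>^2)"
      unfolding e_def t\<sigma> by (simp add: power2_eq_square algebra_simps)
    have ReU: "Re u = Re e - b * \<sigma>^2" unfolding ue by simp
    have ImU: "Im u = Im e - a * \<sigma>" unfolding ue by simp
    define E where "E = norm e"
    have xE: "\<bar>Re e\<bar> \<le> E" unfolding E_def by (rule abs_Re_le_cmod)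
    have yE: "\<bar>Im e\<bar> \<le> E" unfolding E_def by (rule abs_Im_le_cmod)
    have sq: "(Im e - a * \<sigma>)^2 \<ge> a^2 * \<sigma>^2 - 2 * a * s2 * E"
    proof -
      have "\<bar>\<sigma> * Im e\<bar> \<le> s2 * E" unfolding s2_def abs_mult using yE by (intro mult_left_mono) auto
      hence "\<sigma> * Im e \<le> s2 * E" by linarith
      hence "2 * a * (\<sigma> * Im e) \<le> 2 * a * (s2 * E)" using ap by (intro mult_left_mono) auto
      hence "- 2 * a * \<sigma> * Im e \<ge> - (2 * a * s2 * E)" by (simp add: algebra_simps)
      moreover have "(Im e - a * \<sigma>)^2 = (Im e)^2 - 2 * a * \<sigma> * Im e + a^2 * \<sigma>^2"
        by (simp add: power2_eq_square algebra_simps)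
      moreover have "(Im e)^2 \<ge> 0" by simp
      ultimately show ?thesis by linarith
    qed
    have nu2: "(norm u)^2 \<ge> (Im u)^2" by (simp add: cmod_power2)
    have "Re u + (norm u)^2 \<ge> \<gamma> * \<sigma>^2 - E * (1 + 2 * a * s2)"
    proof -
      have i1: "Re u + (norm u)^2 \<ge> (Re e - b * \<sigma>^2) + (Im e - a * \<sigma>)^2"
        using ReU ImU nu2 by simp
      have i2: "\<gamma> * \<sigma>^2 - E * (1 + 2 * a * s2) = a^2 * \<sigma>^2 - b * \<sigma>^2 - E - 2 * a * s2 * E"
        unfolding \<gamma>_def by (simp add: algebra_simps)
      show ?thesis using i1 i2 sq xE by linarith
    qed
    moreover have "E * (1 + 2 * a * s2) \<le> C2 * s2 ^ 3 * (1 + 2 * a)"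
    proof -
      have "1 + 2 * a * s2 \<le> 1 + 2 * a" using s21 ap by simp
      moreover have s20: "s2 \<ge> 0" unfolding s2_def by simp
      moreover have "0 \<le> C2 * s2^3" using C2p s20 by simp
      moreover have "0 \<le> 1 + 2 * a * s2" using ap s20 by simp
      ultimately show ?thesis using nE unfolding E_def[symmetric]
        by (intro mult_mono) auto
    qed
    moreover have "\<gamma> * \<sigma>^2 = \<gamma> * s2^2" unfolding s2_def by simp
    moreover have "C2 * s2 ^ 3 * (1 + 2 * a) < \<gamma> * s2^2"
    proof -
      have "\<epsilon> * n0 < (\<gamma>/(Cb*n0)) * n0" using ep n0p unfolding \<epsilon>0_def by (intro mult_strict_right_mono) auto
      hence "Cb * s2 < \<gamma>" using n0p Cbp s2eq by (simp add: field_simps)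
      moreover have "s2 > 0" using s2eq ep n0p by simp
      ultimately have "(Cb * s2) * s2^2 < \<gamma> * s2^2" by (intro mult_strict_right_mono) auto
      thus ?thesis unfolding Cb_def by (simp add: power2_eq_square power3_eq_cube algebra_simps)
    qed
    ultimately have "Re u + (norm u)^2 > 0" by linarith
    hence "Re (h - 1) + (norm (h - 1))^2 > 0" unfolding u_def .
    hence "norm (h - 1/2) > 1/2" by (rule disk_out)
    thus "good 1 r (complex_of_real \<epsilon> * (\<i> * complex_of_real \<sigma>0))"
      unfolding good_def t_def[symmetric] h_def[symmetric]
      using UB(4) h0 ImL by simp
  qed
qed

lemma tau_good:
  fixes \<alpha> r :: real and s :: complex
  assumes r: "0 < r" "r < 1" and adm: "admissible \<alpha> s"
  shows "\<exists>\<epsilon>0>0. \<forall>\<epsilon>. 0 < \<epsilon> \<longrightarrow> \<epsilon> < \<epsilon>0 \<longrightarrow>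
           good \<alpha> r (complex_of_real \<epsilon> * (s * exp (\<i> * complex_of_real (\<alpha> * pi / 2))))"
proof -
  define \<tau> where "\<tau> = s * exp (\<i> * complex_of_real (\<alpha> * pi / 2))"
  have s0: "s \<noteq> 0" and al: "0 < \<alpha>" and al2: "\<alpha> \<le> 2" using adm unfolding admissible_def by auto
  show ?thesis
  proof (cases "\<alpha> = 1 \<and> (Arg s = 0 \<or> Arg s = pi)")
    case True
    hence a1: "\<alpha> = 1" by simp
    have ims: "Im s = 0" using True Arg_eq_0[of s] Arg_eq_pi[of s] complex_is_Real_iff by auto
    hence sre: "s = complex_of_real (Re s)" by (simp add: complex_eq_iff)
    have res: "Re s \<noteq> 0" using s0 ims by (simp add: complex_eq_iff)
    have "exp (\<i> * complex_of_real (\<alpha> * pi / 2)) = \<i>"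
      using exp_i_half_pi a1 by (simp add: mult.commute)
    hence tau: "\<tau> = \<i> * complex_of_real (Re s)" unfolding \<tau>_def by (subst sre) (simp add: mult.commute)
    have "\<exists>\<epsilon>0>0. \<forall>\<epsilon>. 0 < \<epsilon> \<longrightarrow> \<epsilon> < \<epsilon>0 \<longrightarrow> good \<alpha> r (complex_of_real \<epsilon> * \<tau>)"
      using boundary[OF r res] unfolding tau a1 .
    thus ?thesis unfolding \<tau>_def .
  next
    case False
    define x where "x = Arg s + \<alpha> * pi / 2"
    have px: "pi/2 < x \<and> x < 3 * pi / 2"
    proof (cases "\<alpha> \<le> 1")
      case True
      with adm have A: "(1 - \<alpha>) * pi \<le> Arg s" "Arg s \<le> pi" unfolding admissible_def by auto
      have A': "pi - \<alpha> * pi \<le> Arg s" using A by (simp add: algebra_simps)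
      have ap: "\<alpha> * pi \<le> pi" using True by (simp add: mult_left_le_one_le)
      show ?thesis
      proof (cases "\<alpha> = 1")
        case True
        with False have "Arg s \<noteq> 0" "Arg s \<noteq> pi" by auto
        moreover have "0 \<le> Arg s" using A True by simp
        ultimately have "0 < Arg s" "Arg s < pi" using A by auto
        thus ?thesis unfolding x_def True by simp
      next
        case False
        hence "\<alpha> < 1" using \<open>\<alpha> \<le> 1\<close> by simp
        hence "\<alpha> * pi < pi" by simp
        thus ?thesis unfolding x_def using A' A(2) by linarith
      qed
    next
      case False
      with adm have A: "0 \<le> Arg s" "Arg s \<le> (2 - \<alpha>) * pi" unfolding admissible_def by auto
      have A': "Arg s \<le> 2 * pi - \<alpha> * pi" using A by (simp add: algebra_simps)
      have "pi < \<alpha> * pi" using False by simp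
      thus ?thesis unfolding x_def using A A' by linarith
    qed
    have "\<tau> = complex_of_real (cmod s) * cis x"
    proof -
      have "s = complex_of_real (cmod s) * cis (Arg s)" by (metis rcis_cmod_Arg rcis_def)
      moreover have "exp (\<i> * complex_of_real (\<alpha> * pi / 2)) = cis (\<alpha> * pi / 2)" by (simp add: cis_conv_exp)
      ultimately show ?thesis unfolding \<tau>_def x_def by (metis cis_mult mult.assoc)
    qed
    hence "Re \<tau> = cmod s * cos x" by simp
    moreover have "cos x < 0" using px by (intro cos_lt_zero_pi) auto
    moreover have "cmod s > 0" using s0 by simp
    ultimately have "Re \<tau> < 0" by (simp add: mult_pos_neg)
    from interior[OF al r this] show ?thesis unfolding \<tau>_def .
  qed
qed

theorem mainTheorem3:
  fixes \<alpha> r \<eta> :: real and s :: complex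
  assumes "0 < r" "r < 1" "admissible \<alpha> s" "\<eta> > 0"
  shows "\<not> (\<exists>(\<mu>::real measure) M. prob_space \<mu> \<and> sets \<mu> = sets borel \<and> M > 0 \<and>
            (\<forall>z \<in> Gamma_cone \<eta> M. cauchy_transform \<mu> z = Gasr \<alpha> s r z))"
proof
  assume "\<exists>(\<mu>::real measure) M. prob_space \<mu> \<and> sets \<mu> = sets borel \<and> M > 0 \<and>
            (\<forall>z \<in> Gamma_cone \<eta> M. cauchy_transform \<mu> z = Gasr \<alpha> s r z)"
  then obtain \<mu> M where P: "prob_space \<mu>" and S: "sets \<mu> = sets borel" and Mp: "M > 0"
    and eq: "\<forall>z \<in> Gamma_cone \<eta> M. cauchy_transform \<mu> z = Gasr \<alpha> s r z" by blast
  have s0: "s \<noteq> 0" and al: "0 < \<alpha>" and al2: "\<alpha> \<le> 2" using assms(3) unfolding admissible_def by auto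
  define \<tau> where "\<tau> = s * exp (\<i> * complex_of_real (\<alpha> * pi / 2))"
  obtain \<epsilon>0 where e0: "\<epsilon>0 > 0" and G: "\<And>\<epsilon>. 0 < \<epsilon> \<Longrightarrow> \<epsilon> < \<epsilon>0 \<Longrightarrow> good \<alpha> r (complex_of_real \<epsilon> * \<tau>)"
    using tau_good[OF assms(1,2,3)] unfolding \<tau>_def by blast
  have lim: "((\<lambda>y. y powr (-\<alpha>)) \<longlongrightarrow> (0::real)) at_top"
    by (rule tendsto_neg_powr) (use al filterlim_ident in auto)
  have ev1: "eventually (\<lambda>y. y powr (-\<alpha>) < \<epsilon>0) at_top"
    using order_tendstoD(2)[OF lim e0] .
  have "eventually (\<lambda>y. y powr (-\<alpha>) < \<epsilon>0 \<and> y > M) at_top"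
    using ev1 eventually_gt_at_top[of M] by (rule eventually_conj)
  then obtain N where N: "\<And>n. n \<ge> N \<Longrightarrow> n powr (-\<alpha>) < \<epsilon>0 \<and> n > M"
    unfolding eventually_at_top_linorder by blast
  define y where "y = N"
  have yy: "y powr (-\<alpha>) < \<epsilon>0" "y > M" using N[of N] unfolding y_def by auto
  have y0: "y > 0" using yy Mp by simp
  define \<epsilon> where "\<epsilon> = y powr (-\<alpha>)"
  have ep: "0 < \<epsilon>" "\<epsilon> < \<epsilon>0" unfolding \<epsilon>_def using yy y0 by auto
  define L0 where "L0 = complex_of_real (ln (1/y)) + \<i> * complex_of_real (pi/2)"
  define t where "t = s * exp (complex_of_real \<alpha> * L0)"
  have teq: "t = complex_of_real \<epsilon> * \<tau>"
  proof -
    have "complex_of_real \<alpha> * L0 = complex_of_real (- \<alpha> * ln y) + \<i> * complex_of_real (\<alpha> * pi / 2)"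
      unfolding L0_def using y0 by (simp add: ln_div algebra_simps)
    hence "exp (complex_of_real \<alpha> * L0) = complex_of_real (exp (- \<alpha> * ln y)) * exp (\<i> * complex_of_real (\<alpha> * pi / 2))"
      by (simp only: exp_add exp_of_real)
    moreover have "exp (- \<alpha> * ln y) = \<epsilon>" unfolding \<epsilon>_def using y0 by (simp add: powr_def)
    ultimately show ?thesis unfolding t_def \<tau>_def by (simp add: mult_ac)
  qed
  define h where "h = complex_of_real r * (1 - (1 - t) powr complex_of_real (1/r)) / t"
  have gd: "good \<alpha> r t" using G[OF ep] teq by simp
  hence g1: "1 - t \<noteq> 0" "h \<noteq> 0" "\<bar>Im (Ln h)\<bar> < \<alpha> * pi / 2"
    and g2: "norm (exp (Ln h / complex_of_real \<alpha>) - 1/2) > 1/2"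
    unfolding good_def h_def by auto
  have F: "\<i> * complex_of_real y * Gasr \<alpha> s r (\<i> * complex_of_real y) = exp (Ln h / complex_of_real \<alpha>)"
    using gasr_formula[OF y0 al al2 assms(1) s0, folded L0_def, folded t_def, folded h_def, OF g1] .
  have "\<i> * complex_of_real y \<in> Gamma_cone \<eta> M" unfolding Gamma_cone_def using yy y0 by simp
  hence "cauchy_transform \<mu> (\<i> * complex_of_real y) = Gasr \<alpha> s r (\<i> * complex_of_real y)" using eq by blast
  hence "norm (exp (Ln h / complex_of_real \<alpha>) - 1/2) \<le> 1/2"
    using ct_disk[OF P S y0] F by simp
  with g2 show False by simp
qed

end
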